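(* Let $C_0\subset\mathbb{R}^n$ be closed, $F:\mathbb{R}^n\to\mathbb{R}^m$ continuously differentiable, $\bar u\in C_0$, and suppose $\mathrm{rge}\,\nabla F(\bar u)\cap N_{C_0}(\bar u)=\{0\}$. Assume $\nabla F$ is semidifferentiable at $\bar u$ for a unit direction $w\in T_{C_0}(\bar u)$. If for $z\in\mathbb{R}^m$ \[ \big[\,\nabla F(\bar u)z\in N_{C_0}(\bar u)\ \text{ and }\ (\nabla F)'(\bar u;w)z\in\mathrm{rge}\,\nabla F(\bar u)+N_{C_0}(\bar u)\,\big]\Longrightarrow z=0, \] then $F+\varDelta_{C_0}$ is metrically 2-regular around $(\bar u,F(\bar u))$ relative to $w$.
   Context: $\varDelta_{C_0}(x):=\{0\}$ if $x\in C_0$ and $\emptyset$ otherwise. $\nabla F(u)$ is the $n\times m$ transpose of the Jacobian, $\mathrm{rge}$ denotes range; $(\nabla F)'(\bar u;w):=\lim_{\tau\searrow0,w'\to w}(\nabla F(\bar u+\tau w')-\nabla F(\bar u))/\tau$ (semidifferentiable if it exists). Tangent cone $T_Z(x):=\limsup_{\tau\searrow0}(Z-x)/\tau$; limiting normal cone $N_{Z}(\bar x):=\limsup_{x\to\bar x,x\in Z}T_Z(x)^\circ$ with $K^\circ:=\{v\mid v^\top w\le0\ \forall w\in K\}$. $\mathbb{B}$ closed unit ball, $\mathrm{cone}(Z):=\bigcup_{\gamma\ge0}\gamma Z$. Graphical derivative $DS(\bar u|\bar y)(w):=\{v\mid(w,v)\in T_{\mathrm{gph}\,S}(\bar u,\bar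 y)\}$. $S$ is metrically regular around $(u,y)\in\mathrm{gph}\,S$ with constant $c>0$ if there is $\varepsilon>0$ with $\mathrm{dist}[u',S^{-1}(y')]\le c\,\mathrm{dist}[y',S(u')]$ for all $(u',y')\in(u,y)+\varepsilon\mathbb{B}$. $K_{\varepsilon,\delta}(\bar u;w):=\bar u+(\varepsilon\mathbb{B}\cap\mathrm{cone}(w+\delta\mathbb{B}))$. $S$ is metrically 2-regular around $(\bar u,\bar y)$ relative to $w\ne0$ if for some $c>0$ there are $\varepsilon_0,\delta_0,\rho_0>0$ with $\rho_0>\|w\|^{-1}\sup\{\|\eta\|\mid\eta\in DS(\bar u|\bar y)(w)\}$ such that $S$ is metrically regular around $(u,y)$ with constant $c/\|u-\bar u\|$ for all $u\in K_{\varepsilon_0,\delta_0}(\bar u;w)\setminus\{\bar u\}$ and $y\in S(u)\cap(\bar y+\rho_0\|u-\bar u\|\mathbb{B})$. *)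

theory Defs
  imports "HOL-Analysis.Analysis"
begin

text \<open>Tangent cone T_Z(x) := limsup_{tau \<searrow> 0} (Z - x)/tau (Painleve-Kuratowski outer limit).\<close>
definition tangent_cone :: "'a::real_normed_vector set \<Rightarrow> 'a \<Rightarrow> 'a set" where
  "tangent_cone Z x = {v. \<exists>\<tau> v'. (\<forall>k. \<tau> k > (0::real)) \<and> \<tau> \<longlonglongrightarrow> 0 \<and>
       v' \<longlonglongrightarrow> v \<and> (\<forall>k. x + \<tau> k *\<^sub>R v' k \<in> Z)}"

definition polar_cone :: "'a::real_inner set \<Rightarrow> 'a set" where
  "polar_cone K = {v. \<forall>w\<in>K. inner v w \<le> 0}"

text \<open>Limiting normal cone N_Z(xbar) := limsup_{x \<rightarrow> xbar, x \<in> Z} T_Z(x)^o.\<close>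
definition normal_cone :: "'a::real_inner set \<Rightarrow> 'a \<Rightarrow> 'a set" where
  "normal_cone Z xb = {v. \<exists>x v'. (\<forall>k. x k \<in> Z) \<and> x \<longlonglongrightarrow> xb \<and> v' \<longlonglongrightarrow> v \<and>
       (\<forall>k. v' k \<in> polar_cone (tangent_cone Z (x k)))}"

definition graph :: "('a \<Rightarrow> 'b set) \<Rightarrow> ('a \<times> 'b) set" where
  "graph S = {(u, y). y \<in> S u}"

definition inv_map :: "('a \<Rightarrow> 'b set) \<Rightarrow> 'b \<Rightarrow> 'a set" where
  "inv_map S y = {u. y \<in> S u}"

definition graph_deriv :: "('a::real_normed_vector \<Rightarrow> 'b::real_normed_vector set) \<Rightarrow> 'a \<Rightarrow> 'b \<Rightarrow> 'a \<Rightarrow> 'b set" where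
  "graph_deriv S u y w = {v. (w, v) \<in> tangent_cone (graph S) (u, y)}"

definition set_dist :: "'a::metric_space \<Rightarrow> 'a set \<Rightarrow> ereal" where
  "set_dist x A = (if A = {} then \<infinity> else ereal (infdist x A))"

definition metric_regular_around ::
  "('a::metric_space \<Rightarrow> 'b::metric_space set) \<Rightarrow> 'a \<Rightarrow> 'b \<Rightarrow> real \<Rightarrow> bool" where
  "metric_regular_around S u y c \<longleftrightarrow> y \<in> S u \<and> c > 0 \<and>
     (\<exists>\<epsilon>>0. \<forall>u' y'. dist (u', y') (u, y) \<le> \<epsilon> \<longrightarrow>
        set_dist u' (inv_map S y') \<le> ereal c * set_dist y' (S u'))"

definition cone_of :: "'a::real_vector set \<Rightarrow> 'a set" where
  "cone_of Z = {\<gamma> *\<^sub>R z | \<gamma> z. \<gamma> \<ge> 0 \<and> z \<in> Z}"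

definition K_set :: "real \<Rightarrow> real \<Rightarrow> 'a::real_normed_vector \<Rightarrow> 'a \<Rightarrow> 'a set" where
  "K_set \<epsilon> \<delta> u w = {u + v | v. v \<in> cball 0 \<epsilon> \<inter> cone_of (cball w \<delta>)}"

definition metric_2_regular ::
  "('a::real_normed_vector \<Rightarrow> 'b::real_normed_vector set) \<Rightarrow> 'a \<Rightarrow> 'b \<Rightarrow> 'a \<Rightarrow> bool" where
  "metric_2_regular S ub yb w \<longleftrightarrow> w \<noteq> 0 \<and>
     (\<exists>c>0. \<exists>\<epsilon>0>0. \<exists>\<delta>0>0. \<exists>\<rho>0>0.
        ereal \<rho>0 > ereal (1 / norm w) * (SUP \<eta>\<in>graph_deriv S ub yb w. ereal (norm \<eta>)) \<and>
        (\<forall>u \<in> K_set \<epsilon>0 \<delta>0 ub w - {ub}. \<forall>y \<in> S u \<inter> cball yb (\<rho>0 * norm (u - ub)).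
            metric_regular_around S u y (c / norm (u - ub))))"

definition plus_indicator :: "('a \<Rightarrow> 'b) \<Rightarrow> 'a set \<Rightarrow> 'a \<Rightarrow> 'b set" where
  "plus_indicator F C u = (if u \<in> C then {F u} else {})"

end

theory Submission
  imports Defs
begin


lemma tendsto_mv:
  fixes M :: "'a \<Rightarrow> real^'n^'m"
  assumes "(M \<longlongrightarrow> A) F" "(v \<longlongrightarrow> x) F"
  shows "((\<lambda>k. M k *v v k) \<longlongrightarrow> A *v x) F"
  unfolding matrix_vector_mult_def
  by (intro tendsto_vec_lambda tendsto_sum tendsto_mult tendsto_vec_nth assms)

lemma foc:
  fixes \<psi> :: "real^'n \<Rightarrow> real"
  assumes der: "(\<psi> has_derivative (\<lambda>h. inner G h)) (at z)"
    and mn: "\<forall>x\<in>C. dist x z < \<delta> \<longrightarrow> \<psi> z \<le> \<psi> x" and dp: "\<delta> > 0"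
    and v: "v \<in> tangent_cone C z"
  shows "inner G v \<ge> 0"
proof (rule ccontr)
  assume neg: "\<not> inner G v \<ge> 0"
  define \<eta> where "\<eta> = - inner G v"
  have \<eta>: "\<eta> > 0" using neg by (simp add: \<eta>_def)
  obtain \<tau> v' where tp: "\<forall>k. \<tau> k > (0::real)" and t0: "\<tau> \<longlonglongrightarrow> 0" and vl: "v' \<longlonglongrightarrow> v"
      and inC: "\<forall>k. z + \<tau> k *\<^sub>R v' k \<in> C"
    using v unfolding tangent_cone_def by blast
  define e where "e = \<eta> / (2 * (norm v + 1))"
  have e: "e > 0" using \<eta> unfolding e_def by (intro divide_pos_pos) (auto intro: add_nonneg_pos)
  obtain d where d: "d > 0" and dd: "\<forall>y. norm (y - z) < d \<longrightarrow> norm (\<psi> y - \<psi> z - inner G (y - z)) \<le> e * norm (y - z)"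
    using der e unfolding has_derivative_at_alt by blast
  have h0: "(\<lambda>k. \<tau> k *\<^sub>R v' k) \<longlonglongrightarrow> 0"
    using tendsto_scaleR[OF t0 vl] by simp
  have ev1: "eventually (\<lambda>k. norm (\<tau> k *\<^sub>R v' k) < min d \<delta>) sequentially"
  proof -
    have "(\<lambda>k. norm (\<tau> k *\<^sub>R v' k)) \<longlonglongrightarrow> 0" using h0 by (rule tendsto_norm_zero)
    thus ?thesis using d dp by (intro order_tendstoD(2)) auto
  qed
  have ev2: "eventually (\<lambda>k. norm (v' k) < norm v + 1) sequentially"
    using tendsto_norm[OF vl] by (simp add: order_tendstoD(2))
  have ev3: "eventually (\<lambda>k. inner G (v' k) < inner G v + \<eta>/4) sequentially"
    using tendsto_inner[OF tendsto_const vl, of G] \<eta> by (simp add: order_tendstoD(2))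
  obtain k where k1: "norm (\<tau> k *\<^sub>R v' k) < min d \<delta>" and k2: "norm (v' k) < norm v + 1"
     and k3: "inner G (v' k) < inner G v + \<eta>/4"
    using eventually_conj[OF ev1 eventually_conj[OF ev2 ev3]] eventually_sequentially by fastforce
  let ?y = "z + \<tau> k *\<^sub>R v' k"
  have "\<psi> z \<le> \<psi> ?y" using mn inC k1 by (simp add: dist_norm)
  moreover have "norm (\<psi> ?y - \<psi> z - inner G (\<tau> k *\<^sub>R v' k)) \<le> e * norm (\<tau> k *\<^sub>R v' k)"
    using dd[rule_format, of ?y] k1 by simp
  ultimately have "0 \<le> \<tau> k * inner G (v' k) + e * (\<tau> k * norm (v' k))"
    using tp[rule_format, of k] by (simp add: abs_le_iff)
  hence "0 \<le> \<tau> k * (inner G (v' k) + e * norm (v' k))" by (simp add: algebra_simps)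
  hence A: "0 \<le> inner G (v' k) + e * norm (v' k)"
    using tp[rule_format, of k] by (simp add: zero_le_mult_iff)
  have "e * norm (v' k) \<le> e * (norm v + 1)" using k2 e by simp
  also have "\<dots> = \<eta>/2"
  proof -
    have "norm v + 1 > 0" by (simp add: add_nonneg_pos)
    thus ?thesis unfolding e_def by (simp add: field_simps)
  qed
  finally show False using A k3 \<eta> by (simp add: \<eta>_def)
qed



lemma key:
  fixes C :: "(real^'n) set" and F :: "real^'n \<Rightarrow> real^'m" and J :: "real^'n \<Rightarrow> real^'n^'m"
  assumes clC: "closed C"
    and deriv: "\<forall>u. (F has_derivative (\<lambda>h. J u *v h)) (at u)"
    and r: "r > 0" and lam: "lm > 0"
    and P: "\<forall>x\<in>C. dist x x0 < r \<longrightarrow> (\<forall>e. norm e = 1 \<longrightarrow>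
              (\<forall>\<nu>\<in>polar_cone (tangent_cone C x). 2 * lm < norm (transpose (J x) *v e + \<nu>)))"
    and u': "u' \<in> C" "dist u' x0 < r/4" and y': "norm (F u' - y') < lm * r / 4"
  shows "\<exists>x\<in>C. F x = y' \<and> norm (x - u') \<le> norm (F u' - y') / lm"
proof -
  define g where "g z = norm (F z - y')" for z
  have contF: "continuous_on UNIV F"
  proof (intro continuous_at_imp_continuous_on ballI)
    fix x :: "real^'n"
    show "isCont F x" using deriv[rule_format, of x] by (rule has_derivative_continuous)
  qed
  have contg: "continuous_on UNIV g" unfolding g_def
    by (intro continuous_intros contF)
  define K where "K = C \<inter> cball u' (r/2)"
  have cK: "compact K" unfolding K_def using clC by (simp add: closed_Int_compact)
  have uK: "u' \<in> K" unfolding K_def using u' r by simp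
  have cPhi: "continuous_on K (\<lambda>z. g z + lm * norm (z - u'))"
    by (intro continuous_intros continuous_on_subset[OF contg]) simp
  obtain xs where xsK: "xs \<in> K" and xsm: "\<forall>y\<in>K. g xs + lm * norm (xs - u') \<le> g y + lm * norm (y - u')"
    using continuous_attains_inf[OF cK _ cPhi] uK by blast
  have A: "g xs + lm * norm (xs - u') \<le> g u'" using xsm[rule_format, OF uK] by simp
  have gnn: "g xs \<ge> 0" "lm * norm (xs - u') \<ge> 0" using lam by (auto simp: g_def)
  have xsd: "lm * norm (xs - u') \<le> norm (F u' - y')" using A gnn unfolding g_def by linarith
  hence xsd2: "norm (xs - u') \<le> norm (F u' - y') / lm" using lam by (simp add: pos_le_divide_eq mult.commute)
  have xsr: "norm (xs - u') < r/4"
  proof -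
    have "lm * norm (xs - u') < lm * (r/4)" using xsd y' by linarith
    thus ?thesis using lam by simp
  qed
  show ?thesis
  proof (cases "g xs = 0")
    case True
    thus ?thesis using xsK xsd2 unfolding K_def g_def by auto
  next
    case False
    hence gpos: "g xs > 0" unfolding g_def by simp
    have eke: "\<forall>z\<in>K. g xs - lm * norm (z - xs) \<le> g z"
    proof
      fix z assume "z \<in> K"
      hence "g xs + lm * norm (xs - u') \<le> g z + lm * norm (z - u')" using xsm by blast
      moreover have "norm (z - u') \<le> norm (z - xs) + norm (xs - u')" using norm_triangle_ineq[of "z - xs" "xs - u'"] by simp
      moreover have "lm * norm (z - u') \<le> lm * (norm (z - xs) + norm (xs - u'))"
        using calculation(2) lam by (intro mult_left_mono) auto
      ultimately show "g xs - lm * norm (z - xs) \<le> g z"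
        by (simp add: algebra_simps)
    qed
    obtain s0 where s0: "s0 > 0" and s0d: "\<forall>z. dist z xs < s0 \<longrightarrow> dist (F z) (F xs) < g xs"
      using contF gpos unfolding continuous_on_iff by (metis UNIV_I)
    define s where "s = min (s0/4) (r/16)"
    have s: "s > 0" using s0 r by (simp add: s_def)
    have s_le: "2 * s \<le> r/8" "2 * s < s0" "s \<le> r/16" using s0 r by (auto simp: s_def)
    define K2 where "K2 = C \<inter> cball xs (2 * s)"
    have cK2: "compact K2" unfolding K2_def using clC by (simp add: closed_Int_compact)
    have xsC: "xs \<in> C" using xsK K_def by simp
    have xsK2: "xs \<in> K2" unfolding K2_def using xsC s by simp
    have K2K: "K2 \<subseteq> K"
    proof
      fix z assume "z \<in> K2"
      hence "z \<in> C" "norm (z - xs) \<le> 2 * s" unfolding K2_def by (auto simp: dist_norm norm_minus_commute)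
      moreover have "norm (z - u') \<le> norm (z - xs) + norm (xs - u')" using norm_triangle_ineq[of "z - xs" "xs - u'"] by simp
      moreover have "norm (z - u') \<le> r/2" using calculation xsr s_le r by linarith
      ultimately show "z \<in> K" unfolding K_def
        by (auto simp: dist_norm norm_minus_commute)
    qed
    have K2ne: "\<forall>z\<in>K2. F z \<noteq> y'"
    proof
      fix z assume "z \<in> K2"
      hence "dist z xs < s0" unfolding K2_def using s_le by (auto simp: dist_commute)
      hence "dist (F z) (F xs) < g xs" using s0d by blast
      thus "F z \<noteq> y'" unfolding g_def by (auto simp: dist_norm norm_minus_commute)
    qed
    define \<psi> where "\<psi> z = g z + (lm/s) * (norm (z - xs))^2" for z
    have cpsi: "continuous_on K2 \<psi>" unfolding \<psi>_def
      by (intro continuous_intros continuous_on_subset[OF contg]) simp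
    obtain zs where zsK2: "zs \<in> K2" and zsm: "\<forall>y\<in>K2. \<psi> zs \<le> \<psi> y"
      using continuous_attains_inf[OF cK2 _ cpsi] xsK2 by blast
    have "\<psi> zs \<le> g xs" using zsm[rule_format, OF xsK2] unfolding \<psi>_def by simp
    moreover have "g xs - lm * norm (zs - xs) \<le> g zs" using eke K2K zsK2 by blast
    ultimately have "(lm/s) * (norm (zs - xs))^2 \<le> lm * norm (zs - xs)" unfolding \<psi>_def by simp
    hence "s * ((lm/s) * (norm (zs - xs))^2) \<le> s * (lm * norm (zs - xs))" using s
      by (intro mult_left_mono) auto
    hence "lm * (norm (zs - xs))^2 \<le> lm * (s * norm (zs - xs))" using s by (simp add: algebra_simps)
    hence "(norm (zs - xs))^2 \<le> s * norm (zs - xs)" using lam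
      by (rule mult_left_le_imp_le)
    hence zsx: "norm (zs - xs) \<le> s"
      using s by (cases "norm (zs - xs) = 0") (auto simp: power2_eq_square)
    have zsC: "zs \<in> C" using zsK2 K2_def by simp
    have locmin: "\<forall>x\<in>C. dist x zs < s \<longrightarrow> \<psi> zs \<le> \<psi> x"
    proof (intro ballI impI)
      fix x assume "x \<in> C" "dist x zs < s"
      moreover have "norm (x - xs) \<le> norm (x - zs) + norm (zs - xs)" using norm_triangle_ineq[of "x - zs" "zs - xs"] by simp
      ultimately have "x \<in> K2" unfolding K2_def using zsx by (auto simp: dist_norm norm_minus_commute)
      thus "\<psi> zs \<le> \<psi> x" using zsm by blast
    qed
    define e where "e = sgn (F zs - y')"
    have Fz: "F zs - y' \<noteq> 0" using K2ne zsK2 by simp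
    have enorm: "norm e = 1" unfolding e_def using Fz by (simp add: norm_sgn)
    define Gv where "Gv = transpose (J zs) *v e + (2 * lm/s) *\<^sub>R (zs - xs)"
    have dg: "(g has_derivative (\<lambda>h. inner e (J zs *v h))) (at zs)"
    proof -
      have "((\<lambda>z. F z - y') has_derivative (\<lambda>h. J zs *v h)) (at zs)"
        using deriv by (auto intro!: derivative_eq_intros)
      from diff_chain_at[OF this has_derivative_norm[OF Fz]]
      show ?thesis unfolding g_def e_def o_def by (simp add: inner_commute)
    qed
    have dq: "((\<lambda>z. (lm/s) * (norm (z - xs))^2) has_derivative (\<lambda>h. inner ((2 * lm/s) *\<^sub>R (zs - xs)) h)) (at zs)"
    proof -
      have "((\<lambda>z. inner (z - xs) (z - xs)) has_derivative
             (\<lambda>h. inner (zs - xs) (h - 0) + inner (h - 0) (zs - xs))) (at zs)"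
        by (intro has_derivative_inner has_derivative_diff has_derivative_ident has_derivative_const)
      from has_derivative_mult_right[OF this, of "lm/s"]
      show ?thesis unfolding power2_norm_eq_inner
        by (rule has_derivative_eq_rhs) (simp add: fun_eq_iff inner_commute[of _ "zs - xs"])
    qed
    have dpsi: "(\<psi> has_derivative (\<lambda>h. inner Gv h)) (at zs)"
      unfolding \<psi>_def Gv_def
      by (rule has_derivative_eq_rhs, rule has_derivative_add[OF dg dq])
         (auto simp: inner_add_left dot_lmul_matrix)
    have nu: "- Gv \<in> polar_cone (tangent_cone C zs)"
      unfolding polar_cone_def using foc[OF dpsi locmin s] by simp
    have "dist zs x0 < r"
    proof -
      have t1: "norm (zs - x0) \<le> norm (zs - xs) + norm (xs - x0)"
        using norm_triangle_ineq[of "zs - xs" "xs - x0"] by simp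
      have t2: "norm (xs - x0) \<le> norm (xs - u') + norm (u' - x0)"
        using norm_triangle_ineq[of "xs - u'" "u' - x0"] by simp
      have t3: "norm (u' - x0) < r/4" using u'(2) by (simp add: dist_norm)
      have "norm (zs - x0) < r" using t1 t2 t3 zsx xsr s_le r by linarith
      thus ?thesis by (simp add: dist_norm)
    qed
    hence "2 * lm < norm (transpose (J zs) *v e + - Gv)" using P[rule_format, OF zsC _ enorm nu] by blast
    also have "transpose (J zs) *v e + - Gv = - ((2 * lm/s) *\<^sub>R (zs - xs))" unfolding Gv_def by simp
    also have "norm \<dots> = (2 * lm/s) * norm (zs - xs)" using lam s by simp
    also have "\<dots> \<le> (2 * lm/s) * s" using zsx lam s by (intro mult_left_mono) auto
    also have "\<dots> = 2 * lm" using s by simp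
    finally show ?thesis by simp
  qed
qed



lemma polar_scale: "v \<in> polar_cone K \<Longrightarrow> c \<ge> 0 \<Longrightarrow> c *\<^sub>R v \<in> polar_cone K"
  unfolding polar_cone_def by (auto simp: mult_nonneg_nonpos)

lemma normal_coneI:
  "(\<forall>k. x k \<in> Z) \<Longrightarrow> x \<longlonglongrightarrow> xb \<Longrightarrow> v' \<longlonglongrightarrow> v \<Longrightarrow>
   (\<forall>k. v' k \<in> polar_cone (tangent_cone Z (x k))) \<Longrightarrow> v \<in> normal_cone Z xb"
  unfolding normal_cone_def by blast

lemma normal_scale:
  assumes "v \<in> normal_cone Z xb" "c \<ge> 0" shows "c *\<^sub>R v \<in> normal_cone Z xb"
proof -
  obtain x v' where "\<forall>k. x k \<in> Z" "x \<longlonglongrightarrow> xb" "v' \<longlonglongrightarrow> v"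
     "\<forall>k. v' k \<in> polar_cone (tangent_cone Z (x k))"
    using assms(1) unfolding normal_cone_def by blast
  thus ?thesis using assms(2)
    by (intro normal_coneI[of x Z xb "\<lambda>k. c *\<^sub>R v' k"]) (auto intro: tendsto_intros polar_scale)
qed

lemma normal_zero: "xb \<in> Z \<Longrightarrow> (0::'a::real_inner) \<in> normal_cone Z xb"
  by (rule normal_coneI[of "\<lambda>k. xb" Z xb "\<lambda>k. 0"]) (auto simp: polar_cone_def)

lemma tendsto_transpose:
  fixes M :: "'a \<Rightarrow> real^'n^'m"
  assumes "(M \<longlongrightarrow> A) F"
  shows "((\<lambda>k. transpose (M k)) \<longlongrightarrow> transpose A) F"
  unfolding transpose_def
  by (intro tendsto_vec_lambda tendsto_vec_nth assms)

lemma scaleR_mv: "(c *\<^sub>R M) *v v = c *\<^sub>R (M *v (v::real^'n))" for M :: "real^'n^'m"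
  by (simp add: matrix_vector_mult_def vec_eq_iff sum_distrib_left mult.assoc)

lemma mv_scaleR: "M *v (c *\<^sub>R v) = c *\<^sub>R (M *v (v::real^'n))" for M :: "real^'n^'m"
  by (simp add: matrix_vector_mult_def vec_eq_iff sum_distrib_left mult.left_commute)

lemma mv_minus: "M *v (- v) = - (M *v (v::real^'n))" for M :: "real^'n^'m"
  by (simp add: matrix_vector_mult_def vec_eq_iff sum_negf)

lemma kernel_subspace: "subspace {z. M *v z = (0::real^'m)}" for M :: "real^'n^'m"
  unfolding subspace_def by (auto simp: matrix_vector_right_distrib mv_scaleR)



lemma claim:
  fixes C0 :: "(real^'n) set" and J :: "real^'n \<Rightarrow> real^'n^'m" and ub w :: "real^'n"
    and D :: "real^'m^'n"
  assumes cont: "continuous_on UNIV J"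
    and ub: "ub \<in> C0"
    and qual: "range (\<lambda>z. transpose (J ub) *v z) \<inter> normal_cone C0 ub = {0}"
    and semidiff: "((\<lambda>(\<tau>, w'). (transpose (J (ub + \<tau> *\<^sub>R w')) - transpose (J ub)) /\<^sub>R \<tau>)
                    \<longlongrightarrow> D) (at_right 0 \<times>\<^sub>F nhds w)"
    and cond: "\<forall>z. (transpose (J ub) *v z \<in> normal_cone C0 ub \<and>
                    D *v z \<in> {a + b | a b. a \<in> range (\<lambda>z'. transpose (J ub) *v z') \<and> b \<in> normal_cone C0 ub})
                 \<longrightarrow> z = 0"
  shows "\<exists>c'>0. \<exists>\<epsilon>1>0. \<exists>\<delta>1>0. \<forall>x\<in>C0. x \<noteq> ub \<longrightarrow> norm (x - ub) \<le> \<epsilon>1 \<longrightarrow>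
           norm ((1 / norm (x - ub)) *\<^sub>R (x - ub) - w) \<le> \<delta>1 \<longrightarrow>
           (\<forall>e. norm e = 1 \<longrightarrow> (\<forall>\<nu>\<in>polar_cone (tangent_cone C0 x).
               norm (x - ub) \<le> c' * norm (transpose (J x) *v e + \<nu>)))"
proof (rule ccontr)
  assume H: "\<not> ?thesis"
  have "\<forall>k::nat. \<exists>x. \<exists>e. \<exists>\<nu>. x \<in> C0 \<and> x \<noteq> ub \<and> norm (x - ub) \<le> 1 / real (Suc k) \<and>
          norm ((1 / norm (x - ub)) *\<^sub>R (x - ub) - w) \<le> 1 / real (Suc k) \<and> norm e = 1 \<and>
          \<nu> \<in> polar_cone (tangent_cone C0 x) \<and>
          real (Suc k) * norm (transpose (J x) *v e + \<nu>) < norm (x - ub)"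
  proof
    fix k :: nat
    have p1: "1 / real (Suc k) > 0" and p2: "real (Suc k) > 0" by auto
    have "\<not> (\<forall>x\<in>C0. x \<noteq> ub \<longrightarrow> norm (x - ub) \<le> 1 / real (Suc k) \<longrightarrow>
           norm ((1 / norm (x - ub)) *\<^sub>R (x - ub) - w) \<le> 1 / real (Suc k) \<longrightarrow>
           (\<forall>e. norm e = 1 \<longrightarrow> (\<forall>\<nu>\<in>polar_cone (tangent_cone C0 x).
               norm (x - ub) \<le> real (Suc k) * norm (transpose (J x) *v e + \<nu>))))"
      using H p1 p2 by blast
    thus "\<exists>x. \<exists>e. \<exists>\<nu>. x \<in> C0 \<and> x \<noteq> ub \<and> norm (x - ub) \<le> 1 / real (Suc k) \<and>
          norm ((1 / norm (x - ub)) *\<^sub>R (x - ub) - w) \<le> 1 / real (Suc k) \<and> norm e = 1 \<and>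
          \<nu> \<in> polar_cone (tangent_cone C0 x) \<and>
          real (Suc k) * norm (transpose (J x) *v e + \<nu>) < norm (x - ub)"
      by (auto simp: not_le)
  qed
  then obtain X where "\<forall>k. \<exists>e. \<exists>\<nu>. X k \<in> C0 \<and> X k \<noteq> ub \<and> norm (X k - ub) \<le> 1 / real (Suc k) \<and>
          norm ((1 / norm (X k - ub)) *\<^sub>R (X k - ub) - w) \<le> 1 / real (Suc k) \<and> norm e = 1 \<and>
          \<nu> \<in> polar_cone (tangent_cone C0 (X k)) \<and>
          real (Suc k) * norm (transpose (J (X k)) *v e + \<nu>) < norm (X k - ub)"
    by (rule choice[THEN exE]) blast
  then obtain E where "\<forall>k. \<exists>\<nu>. X k \<in> C0 \<and> X k \<noteq> ub \<and> norm (X k - ub) \<le> 1 / real (Suc k) \<and>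
          norm ((1 / norm (X k - ub)) *\<^sub>R (X k - ub) - w) \<le> 1 / real (Suc k) \<and> norm (E k) = 1 \<and>
          \<nu> \<in> polar_cone (tangent_cone C0 (X k)) \<and>
          real (Suc k) * norm (transpose (J (X k)) *v E k + \<nu>) < norm (X k - ub)"
    by (rule choice[THEN exE]) blast
  then obtain Nu where P: "\<forall>k. X k \<in> C0 \<and> X k \<noteq> ub \<and> norm (X k - ub) \<le> 1 / real (Suc k) \<and>
          norm ((1 / norm (X k - ub)) *\<^sub>R (X k - ub) - w) \<le> 1 / real (Suc k) \<and> norm (E k) = 1 \<and>
          Nu k \<in> polar_cone (tangent_cone C0 (X k)) \<and>
          real (Suc k) * norm (transpose (J (X k)) *v E k + Nu k) < norm (X k - ub)"
    by (rule choice[THEN exE]) blast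

  define t where "t k = norm (X k - ub)" for k
  define W where "W k = (1 / t k) *\<^sub>R (X k - ub)" for k
  define A where "A = transpose (J ub)"
  define Ak where "Ak k = transpose (J (X k))" for k
  define a where "a k = Ak k *v E k + Nu k" for k
  define Dk where "Dk k = (1 / t k) *\<^sub>R (Ak k - A)" for k
  have XC: "\<And>k. X k \<in> C0" and En: "\<And>k. norm (E k) = 1"
    and Npol: "\<And>k. Nu k \<in> polar_cone (tangent_cone C0 (X k))" using P by auto
  have tpos: "\<And>k. t k > 0" using P by (auto simp: t_def)
  have tle: "\<And>k. t k \<le> 1 / real (Suc k)" using P by (auto simp: t_def)
  have Wle: "\<And>k. norm (W k - w) \<le> 1 / real (Suc k)" using P by (auto simp: t_def W_def)
  have ale: "\<And>k. real (Suc k) * norm (a k) < t k" using P by (auto simp: t_def a_def Ak_def)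
  have inv0: "(\<lambda>k. 1 / real (Suc k)) \<longlonglongrightarrow> 0"
    using LIMSEQ_inverse_real_of_nat by (simp add: inverse_eq_divide)
  have t0: "t \<longlonglongrightarrow> 0"
    by (rule tendsto_sandwich[OF _ _ tendsto_const inv0]) (intro always_eventually allI tle less_imp_le[OF tpos] order.refl)+
  have Wl: "W \<longlonglongrightarrow> w"
  proof -
    have "(\<lambda>k. norm (W k - w)) \<longlonglongrightarrow> 0"
      by (rule tendsto_sandwich[OF _ _ tendsto_const inv0]) (intro always_eventually allI Wle norm_ge_zero)+
    hence "(\<lambda>k. W k - w) \<longlonglongrightarrow> 0" by (simp add: tendsto_norm_zero_iff)
    thus ?thesis by (simp add: Lim_null[symmetric])
  qed
  have Xeq: "\<And>k. X k = ub + t k *\<^sub>R W k"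
  proof -
    fix k show "X k = ub + t k *\<^sub>R W k" using tpos[of k] by (simp add: W_def)
  qed
  have Xl: "X \<longlonglongrightarrow> ub"
  proof -
    have "(\<lambda>k. ub + t k *\<^sub>R W k) \<longlonglongrightarrow> ub + 0 *\<^sub>R w"
      by (intro tendsto_intros t0 Wl)
    moreover have "X = (\<lambda>k. ub + t k *\<^sub>R W k)" by (rule ext) (rule Xeq)
    ultimately show ?thesis by simp
  qed
  have ast: "(\<lambda>k. (1 / t k) *\<^sub>R a k) \<longlonglongrightarrow> 0"
  proof -
    have nle: "\<And>k. norm ((1 / t k) *\<^sub>R a k) \<le> 1 / real (Suc k)"
    proof -
      fix k
      have "norm ((1 / t k) *\<^sub>R a k) = norm (a k) / t k" using tpos[of k] by simp
      also have "\<dots> \<le> 1 / real (Suc k)"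
        using ale[of k] tpos[of k] by (simp add: divide_simps mult.commute)
      finally show "norm ((1 / t k) *\<^sub>R a k) \<le> 1 / real (Suc k)" .
    qed
    have "(\<lambda>k. norm ((1 / t k) *\<^sub>R a k)) \<longlonglongrightarrow> 0"
      by (rule tendsto_sandwich[OF _ _ tendsto_const inv0]) (intro always_eventually allI nle norm_ge_zero)+
    thus ?thesis by (rule tendsto_norm_zero_cancel)
  qed
  have al: "a \<longlonglongrightarrow> 0"
  proof -
    have "(\<lambda>k. t k *\<^sub>R ((1 / t k) *\<^sub>R a k)) \<longlonglongrightarrow> 0 *\<^sub>R 0"
      by (intro tendsto_intros t0 ast)
    moreover have "(\<lambda>k. t k *\<^sub>R ((1 / t k) *\<^sub>R a k)) = a"
    proof (rule ext)
      fix k have "t k \<noteq> 0" using tpos[of k] by simp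
      thus "t k *\<^sub>R ((1 / t k) *\<^sub>R a k) = a k" by simp
    qed
    ultimately show ?thesis by simp
  qed
  have Akl: "Ak \<longlonglongrightarrow> A"
  proof -
    have "(\<lambda>k. J (X k)) \<longlonglongrightarrow> J ub"
      using cont Xl by (intro continuous_on_tendsto_compose[of UNIV J]) auto
    thus ?thesis unfolding Ak_def A_def by (rule tendsto_transpose)
  qed
  have Dkl: "Dk \<longlonglongrightarrow> D"
  proof -
    have fl: "filterlim (\<lambda>k. (t k, W k)) (at_right 0 \<times>\<^sub>F nhds w) sequentially"
      by (intro filterlim_Pair tendsto_imp_filterlim_at_right t0 Wl always_eventually allI tpos)
    have "((\<lambda>k. (\<lambda>(\<tau>, w'). (transpose (J (ub + \<tau> *\<^sub>R w')) - transpose (J ub)) /\<^sub>R \<tau>) (t k, W k))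
            \<longlongrightarrow> D) sequentially"
      by (rule filterlim_compose[OF semidiff fl])
    thus ?thesis unfolding Dk_def Ak_def A_def using Xeq by (simp add: divide_inverse_commute)
  qed

  define Ker where "Ker = {z. A *v z = (0::real^'n)}"
  have Ksub: "subspace Ker" unfolding Ker_def by (rule kernel_subspace)
  have "\<forall>k. \<exists>q. (\<forall>v\<in>Ker. inner q v = 0) \<and> A *v q = A *v E k"
  proof
    fix k
    obtain y z where y: "y \<in> span Ker" and z: "\<And>v. v \<in> span Ker \<Longrightarrow> orthogonal z v"
      and yz: "E k = y + z"
      using orthogonal_subspace_decomp_exists[of Ker "E k"] by blast
    have "y \<in> Ker" using y Ksub span_eq_iff by metis
    hence "A *v y = 0" unfolding Ker_def by simp
    hence "A *v E k = A *v z" using yz by (simp add: matrix_vector_right_distrib)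
    moreover have "\<forall>v\<in>Ker. inner z v = 0" using z span_base unfolding orthogonal_def by blast
    ultimately show "\<exists>q. (\<forall>v\<in>Ker. inner q v = 0) \<and> A *v q = A *v E k" by auto
  qed
  then obtain Q where Qo: "\<And>k v. v \<in> Ker \<Longrightarrow> inner (Q k) v = 0" and QA: "\<And>k. A *v Q k = A *v E k"
    by (metis choice)
  define \<sigma> where "\<sigma> k = 1 + norm (Nu k) / t k + norm (Q k) / t k" for k
  have sig1: "\<And>k. \<sigma> k \<ge> 1" using tpos unfolding \<sigma>_def by (simp add: add_nonneg_nonneg less_imp_le)
  have sigpos: "\<And>k. \<sigma> k > 0" using sig1 by (smt (verit))
  define s where "s k = 1 / (\<sigma> k * t k)" for k
  have spos: "\<And>k. s k > 0" unfolding s_def using sigpos tpos by simp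
  define V where "V k = (E k, (s k *\<^sub>R Nu k, (s k *\<^sub>R Q k, 1 / \<sigma> k)))" for k
  have normid: "\<And>k. norm (s k *\<^sub>R Nu k) + norm (s k *\<^sub>R Q k) + 1 / \<sigma> k = 1"
  proof -
    fix k
    have "norm (s k *\<^sub>R Nu k) + norm (s k *\<^sub>R Q k) + 1 / \<sigma> k
        = (norm (Nu k) / t k + norm (Q k) / t k + 1) / \<sigma> k"
      using spos[of k] tpos[of k] sigpos[of k] unfolding s_def by (simp add: field_simps)
    also have "\<dots> = 1" using sigpos[of k] unfolding \<sigma>_def by simp
    finally show "norm (s k *\<^sub>R Nu k) + norm (s k *\<^sub>R Q k) + 1 / \<sigma> k = 1" .
  qed
  have "bounded (range V)"
  proof -
    have "\<And>k. norm (V k) \<le> 2"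
    proof -
      fix k
      have "norm (V k) \<le> norm (E k) + norm (s k *\<^sub>R Nu k, (s k *\<^sub>R Q k, 1 / \<sigma> k))"
        unfolding V_def by (rule norm_Pair_le)
      also have "norm (s k *\<^sub>R Nu k, (s k *\<^sub>R Q k, 1 / \<sigma> k)) \<le>
          norm (s k *\<^sub>R Nu k) + norm (s k *\<^sub>R Q k, 1 / \<sigma> k)" by (rule norm_Pair_le)
      also have "norm (s k *\<^sub>R Q k, 1 / \<sigma> k) \<le> norm (s k *\<^sub>R Q k) + norm (1 / \<sigma> k)"
        by (rule norm_Pair_le)
      finally show "norm (V k) \<le> 2" using En[of k] normid[of k] sigpos[of k] by simp
    qed
    thus ?thesis unfolding bounded_iff by blast
  qed
  then obtain l r where r: "strict_mono r" and Vl: "(V \<circ> r) \<longlonglongrightarrow> l"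
    using bounded_imp_convergent_subsequence by blast
  obtain e nb qb \<theta> where l: "l = (e, (nb, (qb, \<theta>)))" by (metis prod.exhaust)
  have El: "(E \<circ> r) \<longlonglongrightarrow> e" using tendsto_fst[OF Vl] unfolding l V_def by (simp add: o_def)
  have nbl: "(\<lambda>k. s (r k) *\<^sub>R Nu (r k)) \<longlonglongrightarrow> nb"
    using tendsto_fst[OF tendsto_snd[OF Vl]] unfolding l V_def by (simp add: o_def)
  have qbl: "(\<lambda>k. s (r k) *\<^sub>R Q (r k)) \<longlonglongrightarrow> qb"
    using tendsto_fst[OF tendsto_snd[OF tendsto_snd[OF Vl]]] unfolding l V_def by (simp add: o_def)
  have thl: "(\<lambda>k. 1 / \<sigma> (r k)) \<longlonglongrightarrow> \<theta>"
    using tendsto_snd[OF tendsto_snd[OF tendsto_snd[OF Vl]]] unfolding l V_def by (simp add: o_def)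

  have rl: "\<And>f L. f \<longlonglongrightarrow> L \<Longrightarrow> (\<lambda>k. f (r k)) \<longlonglongrightarrow> L"
    using LIMSEQ_subseq_LIMSEQ[OF _ r] unfolding o_def by blast
  have El': "(\<lambda>k. E (r k)) \<longlonglongrightarrow> e" using El by (simp add: o_def)
  have en: "norm e = 1"
  proof -
    have "(\<lambda>k. norm (E (r k))) \<longlonglongrightarrow> norm e" by (rule tendsto_norm[OF El'])
    thus ?thesis using En LIMSEQ_unique[OF _ tendsto_const] by simp
  qed
  have NuEq: "\<And>k. Nu k = a k - Ak k *v E k" unfolding a_def by simp
  have Nul: "(\<lambda>k. Nu (r k)) \<longlonglongrightarrow> 0 - A *v e"
    unfolding NuEq by (intro tendsto_diff tendsto_mv rl al Akl El')
  have "- (A *v e) \<in> normal_cone C0 ub"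
    using normal_coneI[of "\<lambda>k. X (r k)" C0 ub "\<lambda>k. Nu (r k)" "- (A *v e)"] XC rl[OF Xl] Nul Npol by simp
  moreover have "- (A *v e) \<in> range (\<lambda>z. transpose (J ub) *v z)"
    unfolding A_def by (metis mv_minus rangeI)
  ultimately have "- (A *v e) \<in> range (\<lambda>z. transpose (J ub) *v z) \<inter> normal_cone C0 ub" by simp
  hence "- (A *v e) \<in> {0}" by (simp only: qual)
  hence Ae: "A *v e = 0" by simp
  have basic: "\<And>k. s k *\<^sub>R Nu k + A *v (s k *\<^sub>R Q k) = (1 / \<sigma> k) *\<^sub>R ((1 / t k) *\<^sub>R a k - Dk k *v E k)"
  proof -
    fix k
    have tk: "t k \<noteq> 0" using tpos[of k] by simp
    have "Ak k = A + t k *\<^sub>R Dk k" unfolding Dk_def using tk by simp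
    hence "Ak k *v E k = A *v Q k + t k *\<^sub>R (Dk k *v E k)"
      using QA by (simp add: matrix_vector_mult_add_rdistrib scaleR_mv)
    hence "Nu k = a k - A *v Q k - t k *\<^sub>R (Dk k *v E k)" unfolding NuEq by simp
    hence "s k *\<^sub>R Nu k = s k *\<^sub>R a k - s k *\<^sub>R (A *v Q k) - (s k * t k) *\<^sub>R (Dk k *v E k)"
      by (simp add: scaleR_diff_right)
    hence "s k *\<^sub>R Nu k + A *v (s k *\<^sub>R Q k) = s k *\<^sub>R a k - (s k * t k) *\<^sub>R (Dk k *v E k)"
      by (simp add: mv_scaleR)
    also have "\<dots> = (1 / \<sigma> k) *\<^sub>R ((1 / t k) *\<^sub>R a k - Dk k *v E k)"
      unfolding s_def using tk sigpos[of k] by (simp add: algebra_simps)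
    finally show "s k *\<^sub>R Nu k + A *v (s k *\<^sub>R Q k) = (1 / \<sigma> k) *\<^sub>R ((1 / t k) *\<^sub>R a k - Dk k *v E k)" .
  qed
  have L1: "(\<lambda>k. s (r k) *\<^sub>R Nu (r k) + A *v (s (r k) *\<^sub>R Q (r k))) \<longlonglongrightarrow> nb + A *v qb"
    by (intro tendsto_add tendsto_mv tendsto_const nbl qbl)
  have L2: "(\<lambda>k. (1 / \<sigma> (r k)) *\<^sub>R ((1 / t (r k)) *\<^sub>R a (r k) - Dk (r k) *v E (r k))) \<longlonglongrightarrow> \<theta> *\<^sub>R (0 - D *v e)"
    by (intro tendsto_scaleR tendsto_diff tendsto_mv thl rl ast Dkl El')
  have eqn: "nb + A *v qb = \<theta> *\<^sub>R (0 - D *v e)"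
    using LIMSEQ_unique[OF L1] L2 basic by simp
  have nid: "norm nb + norm qb + \<theta> = 1"
  proof -
    have "(\<lambda>k. norm (s (r k) *\<^sub>R Nu (r k)) + norm (s (r k) *\<^sub>R Q (r k)) + 1 / \<sigma> (r k)) \<longlonglongrightarrow> norm nb + norm qb + \<theta>"
      by (intro tendsto_add tendsto_norm nbl qbl thl)
    thus ?thesis using normid LIMSEQ_unique[OF _ tendsto_const] by simp
  qed
  have th0: "\<theta> \<ge> 0"
    using thl by (rule tendsto_lowerbound) (intro always_eventually allI less_imp_le, simp add: sigpos, simp)
  have nbN: "nb \<in> normal_cone C0 ub"
    using normal_coneI[of "\<lambda>k. X (r k)" C0 ub "\<lambda>k. s (r k) *\<^sub>R Nu (r k)" nb] XC rl[OF Xl] nbl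
      polar_scale[OF Npol less_imp_le[OF spos]] by simp
  have qbo: "\<And>v. v \<in> Ker \<Longrightarrow> inner qb v = 0"
  proof -
    fix v assume v: "v \<in> Ker"
    have "(\<lambda>k. inner (s (r k) *\<^sub>R Q (r k)) v) \<longlonglongrightarrow> inner qb v"
      by (intro tendsto_inner qbl tendsto_const)
    moreover have "(\<lambda>k. inner (s (r k) *\<^sub>R Q (r k)) v) = (\<lambda>k. 0)"
      using Qo[OF v] by simp
    ultimately show "inner qb v = 0" using LIMSEQ_unique tendsto_const by metis
  qed
  show False
  proof (cases "\<theta> = 0")
    case True
    hence "nb = A *v (- qb)" using eqn by (simp add: mv_minus eq_neg_iff_add_eq_0)
    hence "nb \<in> range (\<lambda>z. transpose (J ub) *v z)" unfolding A_def by simp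
    hence "nb \<in> range (\<lambda>z. transpose (J ub) *v z) \<inter> normal_cone C0 ub" using nbN by simp
    hence "nb \<in> {0}" by (simp only: qual)
    hence nb0: "nb = 0" by simp
    hence "qb \<in> Ker" using eqn True unfolding Ker_def by simp
    hence "inner qb qb = 0" by (rule qbo)
    hence "qb = 0" by simp
    thus False using nid nb0 True by simp
  next
    case False
    hence thp: "\<theta> > 0" using th0 by simp
    have "D *v (- e) = (1 / \<theta>) *\<^sub>R (nb + A *v qb)"
      using eqn thp by (simp add: mv_minus)
    also have "\<dots> = A *v ((1 / \<theta>) *\<^sub>R qb) + (1 / \<theta>) *\<^sub>R nb"
      by (simp add: mv_scaleR algebra_simps)
    finally have "D *v (- e) \<in> {a + b | a b. a \<in> range (\<lambda>z'. transpose (J ub) *v z') \<and> b \<in> normal_cone C0 ub}"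
      using normal_scale[OF nbN, of "1 / \<theta>"] thp unfolding A_def by auto
    moreover have "transpose (J ub) *v (- e) \<in> normal_cone C0 ub"
      using Ae normal_zero[OF ub] unfolding A_def by (simp add: mv_minus)
    ultimately have "- e = 0" using cond by blast
    thus False using en by simp
  qed
qed


lemma unit_diff:
  fixes a b :: "'a::real_normed_vector"
  assumes "b \<noteq> 0" "a \<noteq> 0"
  shows "norm ((1 / norm a) *\<^sub>R a - (1 / norm b) *\<^sub>R b) \<le> 2 * norm (a - b) / norm b"
proof -
  have nb: "norm b > 0" "norm a > 0" using assms by auto
  have "(1 / norm a) *\<^sub>R a - (1 / norm b) *\<^sub>R b = (1 / norm b) *\<^sub>R (a - b) + (1 / norm a - 1 / norm b) *\<^sub>R a"
    by (simp add: algebra_simps)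
  hence "norm ((1 / norm a) *\<^sub>R a - (1 / norm b) *\<^sub>R b) \<le> norm ((1 / norm b) *\<^sub>R (a - b)) + norm ((1 / norm a - 1 / norm b) *\<^sub>R a)"
    by (metis norm_triangle_ineq)
  also have "norm ((1 / norm b) *\<^sub>R (a - b)) = norm (a - b) / norm b" using nb by simp
  also have "norm ((1 / norm a - 1 / norm b) *\<^sub>R a) = \<bar>norm b - norm a\<bar> / norm b"
  proof -
    have eq: "1 / norm a - 1 / norm b = (norm b - norm a) / (norm a * norm b)" using nb by (simp add: field_simps)
    have "norm ((1 / norm a - 1 / norm b) *\<^sub>R a) = \<bar>(norm b - norm a) / (norm a * norm b)\<bar> * norm a"
      unfolding eq[symmetric] by simp
    also have "\<dots> = \<bar>norm b - norm a\<bar> / norm b" using nb by (simp add: abs_div)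
    finally show ?thesis .
  qed
  also have "\<bar>norm b - norm a\<bar> \<le> norm (a - b)"
    by (metis norm_minus_commute norm_triangle_ineq3)
  hence "\<bar>norm b - norm a\<bar> / norm b \<le> norm (a - b) / norm b" using nb by (simp add: divide_right_mono)
  finally show ?thesis by simp
qed

lemma gd_bound:
  fixes F :: "real^'n \<Rightarrow> real^'m"
  assumes der: "(F has_derivative (\<lambda>h. J0 *v h)) (at ub)"
  shows "\<exists>L. \<forall>\<eta> \<in> graph_deriv (plus_indicator F C0) ub (F ub) w. norm \<eta> \<le> L * norm w"
proof -
  obtain d where d: "d > 0" and dd: "\<forall>y. norm (y - ub) < d \<longrightarrow> norm (F y - F ub - J0 *v (y - ub)) \<le> 1 * norm (y - ub)"
    using der unfolding has_derivative_at_alt by (meson zero_less_one)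
  obtain B where B: "\<forall>x. norm (J0 *v x) \<le> norm x * B"
    using bounded_linear.bounded[OF matrix_vector_mul_bounded_linear[of J0]] by blast
  define L where "L = B + 1"
  have Lip: "\<And>y. norm (y - ub) < d \<Longrightarrow> norm (F y - F ub) \<le> L * norm (y - ub)"
  proof -
    fix y assume "norm (y - ub) < d"
    hence "norm (F y - F ub - J0 *v (y - ub)) \<le> norm (y - ub)" using dd by simp
    moreover have "norm (F y - F ub) \<le> norm (F y - F ub - J0 *v (y - ub)) + norm (J0 *v (y - ub))"
      using norm_triangle_ineq[of "F y - F ub - J0 *v (y - ub)" "J0 *v (y - ub)"] by simp
    ultimately show "norm (F y - F ub) \<le> L * norm (y - ub)" using B[rule_format, of "y - ub"]
      unfolding L_def by (simp add: algebra_simps)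
  qed
  have "\<forall>\<eta> \<in> graph_deriv (plus_indicator F C0) ub (F ub) w. norm \<eta> \<le> L * norm w"
  proof
    fix \<eta> assume "\<eta> \<in> graph_deriv (plus_indicator F C0) ub (F ub) w"
    then obtain \<tau> v' where tp: "\<forall>k. \<tau> k > (0::real)" and t0: "\<tau> \<longlonglongrightarrow> 0" and vl: "v' \<longlonglongrightarrow> (w, \<eta>)"
      and inG: "\<forall>k. (ub, F ub) + \<tau> k *\<^sub>R v' k \<in> graph (plus_indicator F C0)"
      unfolding graph_deriv_def tangent_cone_def by blast
    define wk where "wk k = fst (v' k)" for k
    define ek where "ek k = snd (v' k)" for k
    have wl: "wk \<longlonglongrightarrow> w" unfolding wk_def using tendsto_fst[OF vl] by simp
    have el: "ek \<longlonglongrightarrow> \<eta>" unfolding ek_def using tendsto_snd[OF vl] by simp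
    have Feq: "\<And>k. F ub + \<tau> k *\<^sub>R ek k = F (ub + \<tau> k *\<^sub>R wk k)"
    proof -
      fix k
      have "(ub + \<tau> k *\<^sub>R wk k, F ub + \<tau> k *\<^sub>R ek k) \<in> graph (plus_indicator F C0)"
        using inG[rule_format, of k] unfolding wk_def ek_def by (cases "v' k") simp
      thus "F ub + \<tau> k *\<^sub>R ek k = F (ub + \<tau> k *\<^sub>R wk k)"
        unfolding graph_def plus_indicator_def by (auto split: if_splits)
    qed
    have "(\<lambda>k. \<tau> k * norm (wk k)) \<longlonglongrightarrow> 0 * norm w"
      by (intro tendsto_intros t0 wl)
    hence ev: "eventually (\<lambda>k. \<tau> k * norm (wk k) < d) sequentially"
      using d by (simp add: order_tendstoD(2))
    have "eventually (\<lambda>k. norm (ek k) \<le> L * norm (wk k)) sequentially"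
      using ev
    proof (rule eventually_mono)
      fix k assume k: "\<tau> k * norm (wk k) < d"
      have "norm ((ub + \<tau> k *\<^sub>R wk k) - ub) < d" using k tp[rule_format, of k] by simp
      hence "norm (F (ub + \<tau> k *\<^sub>R wk k) - F ub) \<le> L * norm ((ub + \<tau> k *\<^sub>R wk k) - ub)" by (rule Lip)
      hence "\<tau> k * norm (ek k) \<le> \<tau> k * (L * norm (wk k))"
        using Feq[of k, symmetric] tp[rule_format, of k] by (simp add: algebra_simps)
      thus "norm (ek k) \<le> L * norm (wk k)" using tp[rule_format, of k] by (meson mult_le_cancel_left_pos)
    qed
    moreover have "(\<lambda>k. L * norm (wk k)) \<longlonglongrightarrow> L * norm w" by (intro tendsto_intros wl)
    ultimately show "norm \<eta> \<le> L * norm w"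
      using tendsto_le[OF trivial_limit_sequentially _ tendsto_norm[OF el]] by blast
  qed
  thus ?thesis by blast
qed

lemma cone_angle:
  fixes z w :: "'a::real_normed_vector"
  assumes w: "norm w = 1" and zw: "norm (z - w) \<le> \<delta>" and z: "z \<noteq> 0" and g: "\<gamma> > 0"
  shows "norm ((1 / norm (\<gamma> *\<^sub>R z)) *\<^sub>R (\<gamma> *\<^sub>R z) - w) \<le> 2 * \<delta>"
proof -
  have nz: "norm z > 0" using z by simp
  have e1: "(1 / norm (\<gamma> *\<^sub>R z)) *\<^sub>R (\<gamma> *\<^sub>R z) = (1 / norm z) *\<^sub>R z" using g nz by simp
  have "(1 / norm z) *\<^sub>R z - w = ((1 / norm z) *\<^sub>R z - z) + (z - w)" by simp
  moreover have "norm ((1 / norm z) *\<^sub>R z - z) = \<bar>1 - norm z\<bar>"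
  proof -
    have "(1 / norm z) *\<^sub>R z - z = (1 / norm z - 1) *\<^sub>R z" by (simp add: algebra_simps)
    hence "norm ((1 / norm z) *\<^sub>R z - z) = \<bar>1 / norm z - 1\<bar> * norm z" by simp
    also have "\<dots> = \<bar>(1 / norm z - 1) * norm z\<bar>" using nz by (simp add: abs_mult)
    also have "(1 / norm z - 1) * norm z = 1 - norm z" using nz by (simp add: algebra_simps)
    finally show ?thesis .
  qed
  moreover have "\<bar>1 - norm z\<bar> \<le> norm (z - w)"
    using w norm_triangle_ineq3[of w z] by (simp add: norm_minus_commute)
  ultimately have "norm ((1 / norm z) *\<^sub>R z - w) \<le> 2 * \<delta>"
    using norm_triangle_ineq[of "(1 / norm z) *\<^sub>R z - z" "z - w"] zw by simp
  thus ?thesis unfolding e1 .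
qed



theorem theorem9:
  fixes C0 :: "(real^'n) set"
    and F :: "real^'n \<Rightarrow> real^'m"
    and J :: "real^'n \<Rightarrow> real^'n^'m"
    and ub w :: "real^'n"
    and D :: "real^'m^'n"
  assumes closed: "closed C0"
    and deriv: "\<forall>u. (F has_derivative (\<lambda>h. J u *v h)) (at u)"
    and cont: "continuous_on UNIV J"
    and ub: "ub \<in> C0"
    and qual: "range (\<lambda>z. transpose (J ub) *v z) \<inter> normal_cone C0 ub = {0}"
    and w_unit: "norm w = 1"
    and w_tan: "w \<in> tangent_cone C0 ub"
    and semidiff: "((\<lambda>(\<tau>, w'). (transpose (J (ub + \<tau> *\<^sub>R w')) - transpose (J ub)) /\<^sub>R \<tau>)
                    \<longlongrightarrow> D) (at_right 0 \<times>\<^sub>F nhds w)"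
    and cond: "\<forall>z. (transpose (J ub) *v z \<in> normal_cone C0 ub \<and>
                    D *v z \<in> {a + b | a b. a \<in> range (\<lambda>z'. transpose (J ub) *v z') \<and> b \<in> normal_cone C0 ub})
                 \<longrightarrow> z = 0"
  shows "metric_2_regular (plus_indicator F C0) ub (F ub) w"
proof -
  define S where "S = plus_indicator F C0"
  have wne: "w \<noteq> 0" using w_unit by auto
  obtain L where L: "\<forall>\<eta> \<in> graph_deriv S ub (F ub) w. norm \<eta> \<le> L * norm w"
    using gd_bound[of F "J ub" ub C0 w] deriv unfolding S_def by blast
  define \<rho>0 where "\<rho>0 = max L 0 + 1"
  have rho0: "\<rho>0 > 0" unfolding \<rho>0_def by simp
  have rho: "ereal \<rho>0 > ereal (1 / norm w) * (SUP \<eta>\<in>graph_deriv S ub (F ub) w. ereal (norm \<eta>))"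
  proof -
    have "(SUP \<eta>\<in>graph_deriv S ub (F ub) w. ereal (norm \<eta>)) \<le> ereal L"
      by (rule SUP_least) (use L w_unit in simp)
    also have "ereal L < ereal \<rho>0" unfolding \<rho>0_def by simp
    finally show ?thesis using w_unit by simp
  qed
  obtain c' \<epsilon>1 \<delta>1 where c': "c' > 0" and e1: "\<epsilon>1 > 0" and d1: "\<delta>1 > 0"
    and CL: "\<forall>x\<in>C0. x \<noteq> ub \<longrightarrow> norm (x - ub) \<le> \<epsilon>1 \<longrightarrow>
           norm ((1 / norm (x - ub)) *\<^sub>R (x - ub) - w) \<le> \<delta>1 \<longrightarrow>
           (\<forall>e. norm e = 1 \<longrightarrow> (\<forall>\<nu>\<in>polar_cone (tangent_cone C0 x).
               norm (x - ub) \<le> c' * norm (transpose (J x) *v e + \<nu>)))"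
    using claim[OF cont ub qual semidiff cond] by blast
  define c where "c = 5 * c'"
  define \<epsilon>0 where "\<epsilon>0 = \<epsilon>1 / 2"
  define \<delta>0 where "\<delta>0 = \<delta>1 / 3"
  have cpos: "c > 0" "\<epsilon>0 > 0" "\<delta>0 > 0" using c' e1 d1 by (auto simp: c_def \<epsilon>0_def \<delta>0_def)
  have main: "\<forall>u \<in> K_set \<epsilon>0 \<delta>0 ub w - {ub}. \<forall>y \<in> S u \<inter> cball (F ub) (\<rho>0 * norm (u - ub)).
            metric_regular_around S u y (c / norm (u - ub))"
  proof (intro ballI)
    fix u y assume u: "u \<in> K_set \<epsilon>0 \<delta>0 ub w - {ub}" and y: "y \<in> S u \<inter> cball (F ub) (\<rho>0 * norm (u - ub))"
    have uC: "u \<in> C0" and yF: "y = F u" using y unfolding S_def plus_indicator_def by (auto split: if_splits)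
    obtain v where uv: "u = ub + v" and vb: "norm v \<le> \<epsilon>0" and vc: "v \<in> cone_of (cball w \<delta>0)"
      using u unfolding K_set_def by auto
    obtain \<gamma> z where vgz: "v = \<gamma> *\<^sub>R z" and g0: "\<gamma> \<ge> 0" and zw: "norm (z - w) \<le> \<delta>0"
      using vc unfolding cone_of_def by (auto simp: dist_norm norm_minus_commute)
    have vne: "v \<noteq> 0" using u uv by auto
    hence gp: "\<gamma> > 0" and zne: "z \<noteq> 0" using vgz g0 by auto
    define t where "t = norm (u - ub)"
    have tv: "t = norm v" unfolding t_def uv by simp
    have tp: "t > 0" using vne tv by simp
    have tle: "t \<le> \<epsilon>0" using vb tv by simp
    have ang: "norm ((1 / t) *\<^sub>R (u - ub) - w) \<le> 2 * \<delta>0"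
      using cone_angle[OF w_unit zw zne gp] unfolding tv uv vgz by simp
    define lm where "lm = t / c"
    have lmp: "lm > 0" unfolding lm_def using tp cpos by simp
    define r where "r = min (t/2) (\<delta>0 * t / 2)"
    have rp: "r > 0" unfolding r_def using tp cpos by simp
    have r1: "r \<le> t/2" and r2: "r \<le> \<delta>0 * t / 2" unfolding r_def by auto
    have Pc: "\<forall>x\<in>C0. dist x u < r \<longrightarrow> (\<forall>e. norm e = 1 \<longrightarrow>
              (\<forall>\<nu>\<in>polar_cone (tangent_cone C0 x). 2 * lm < norm (transpose (J x) *v e + \<nu>)))"
    proof (intro ballI impI allI)
      fix x and e :: "real^'m" and \<nu> assume xC: "x \<in> C0" and xd: "dist x u < r" and en: "norm e = 1"
        and nu: "\<nu> \<in> polar_cone (tangent_cone C0 x)"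
      have dxu: "norm ((x - ub) - (u - ub)) < r" using xd by (simp add: dist_norm)
      have tri1: "norm (u - ub) \<le> norm (x - ub) + norm ((x - ub) - (u - ub))"
        using norm_triangle_ineq[of "x - ub" "(u - ub) - (x - ub)"] by (simp add: norm_minus_commute)
      have tri2: "norm (x - ub) \<le> norm (u - ub) + norm ((x - ub) - (u - ub))"
        using norm_triangle_ineq[of "u - ub" "(x - ub) - (u - ub)"] by simp
      have xlow: "norm (x - ub) \<ge> t/2" using tri1 dxu r1 unfolding t_def by linarith
      hence xne: "x \<noteq> ub" using tp by auto
      have xup: "norm (x - ub) \<le> \<epsilon>1" using tri2 dxu r1 tle e1 unfolding t_def \<epsilon>0_def by linarith
      have "norm ((1 / norm (x - ub)) *\<^sub>R (x - ub) - w) \<le>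
            norm ((1 / norm (x - ub)) *\<^sub>R (x - ub) - (1 / norm (u - ub)) *\<^sub>R (u - ub)) +
            norm ((1 / norm (u - ub)) *\<^sub>R (u - ub) - w)"
        using norm_triangle_ineq[of "(1 / norm (x - ub)) *\<^sub>R (x - ub) - (1 / norm (u - ub)) *\<^sub>R (u - ub)"
            "(1 / norm (u - ub)) *\<^sub>R (u - ub) - w"] by simp
      also have "norm ((1 / norm (x - ub)) *\<^sub>R (x - ub) - (1 / norm (u - ub)) *\<^sub>R (u - ub))
          \<le> 2 * norm ((x - ub) - (u - ub)) / norm (u - ub)"
        by (rule unit_diff) (use tp xne t_def in auto)
      also have "2 * norm ((x - ub) - (u - ub)) / norm (u - ub) \<le> 2 * r / t"
        using dxu tp unfolding t_def by (simp add: divide_right_mono)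
      also have "2 * r / t \<le> \<delta>0" using r2 tp by (simp add: field_simps)
      finally have xang: "norm ((1 / norm (x - ub)) *\<^sub>R (x - ub) - w) \<le> \<delta>1"
        using ang unfolding t_def \<delta>0_def by simp
      have "norm (x - ub) \<le> c' * norm (transpose (J x) *v e + \<nu>)"
        using CL xC xne xup xang en nu by blast
      hence "t/2 \<le> c' * norm (transpose (J x) *v e + \<nu>)" using xlow by linarith
      moreover have "c' * (2 * lm) < t / 2" unfolding lm_def c_def using c' tp by (simp add: field_simps)
      ultimately have "c' * (2 * lm) < c' * norm (transpose (J x) *v e + \<nu>)" by linarith
      thus "2 * lm < norm (transpose (J x) *v e + \<nu>)" using c' by simp
    qed
    have KY: "\<And>u' y'. u' \<in> C0 \<Longrightarrow> dist u' u < r/4 \<Longrightarrow> norm (F u' - y') < lm * r / 4 \<Longrightarrow>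
                \<exists>x\<in>C0. F x = y' \<and> norm (x - u') \<le> norm (F u' - y') / lm"
      by (rule key[OF closed deriv rp lmp Pc]) auto
    have contF: "isCont F u" using deriv[rule_format, of u] by (rule has_derivative_continuous)
    obtain \<eta> where \<eta>: "\<eta> > 0" and \<eta>d: "\<forall>u'. dist u' u < \<eta> \<longrightarrow> dist (F u') (F u) < lm * r / 8"
      using contF[unfolded continuous_at_eps_delta] lmp rp by (metis divide_pos_pos mult_pos_pos zero_less_numeral)
    define \<epsilon> where "\<epsilon> = min (r/8) (min (\<eta>/2) (lm * r / 16))"
    have \<epsilon>p: "\<epsilon> > 0" unfolding \<epsilon>_def using rp \<eta> lmp by simp
    show "metric_regular_around S u y (c / norm (u - ub))"
      unfolding metric_regular_around_def
    proof (intro conjI exI[of _ \<epsilon>] allI impI)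
      show "y \<in> S u" using y by simp
      show "c / norm (u - ub) > 0" using cpos tp t_def by simp
      show "\<epsilon> > 0" by (rule \<epsilon>p)
      fix u' y' assume dd: "dist (u', y') (u, y) \<le> \<epsilon>"
      have du: "dist u' u \<le> \<epsilon>" using dist_fst_le[of "(u', y')" "(u, y)"] dd by simp
      have dy: "dist y' y \<le> \<epsilon>" using dist_snd_le[of "(u', y')" "(u, y)"] dd by simp
      show "set_dist u' (inv_map S y') \<le> ereal (c / norm (u - ub)) * set_dist y' (S u')"
      proof (cases "u' \<in> C0")
        case False
        hence "S u' = {}" unfolding S_def plus_indicator_def by simp
        hence "set_dist y' (S u') = \<infinity>" unfolding set_dist_def by simp
        moreover have "c / norm (u - ub) > 0" using cpos tp t_def by simp
        moreover have "\<And>q. q > 0 \<Longrightarrow> ereal q * \<infinity> = \<infinity>" by simp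
        ultimately have "ereal (c / norm (u - ub)) * set_dist y' (S u') = \<infinity>" by metis
        thus ?thesis by (simp only: ereal_less_eq(1))
      next
        case True
        have Su': "S u' = {F u'}" using True unfolding S_def plus_indicator_def by simp
        have d1': "dist u' u < r/4" using du \<epsilon>_def rp by simp
        have "dist u' u < \<eta>" using du \<epsilon>_def \<eta> by simp
        hence "dist (F u') (F u) < lm * r / 8" using \<eta>d by blast
        moreover have "dist y' (F u) \<le> lm * r / 16" using dy yF \<epsilon>_def by simp
        moreover have "norm (F u' - y') \<le> dist (F u') (F u) + dist y' (F u)"
          using dist_triangle2[of "F u'" y' "F u"] by (simp add: dist_norm)
        moreover have "lm * r > 0" using lmp rp by simp
        ultimately have "norm (F u' - y') < lm * r / 4" by linarith
        then obtain x where xC: "x \<in> C0" and Fx: "F x = y'" and xd: "norm (x - u') \<le> norm (F u' - y') / lm"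
          using KY[OF True d1'] by blast
        have xin: "x \<in> inv_map S y'" unfolding inv_map_def S_def plus_indicator_def using xC Fx by simp
        hence ne: "inv_map S y' \<noteq> {}" by auto
        have "infdist u' (inv_map S y') \<le> dist u' x" using xin by (rule infdist_le)
        also have "dist u' x \<le> norm (F u' - y') / lm" using xd by (simp add: dist_norm norm_minus_commute)
        also have "norm (F u' - y') / lm = (c / norm (u - ub)) * dist y' (F u')"
          unfolding lm_def t_def using tp cpos by (simp add: dist_norm norm_minus_commute field_simps t_def)
        finally have "infdist u' (inv_map S y') \<le> (c / norm (u - ub)) * dist y' (F u')" .
        thus ?thesis unfolding set_dist_def Su' using ne by (simp add: infdist_singleton)
      qed
    qed
  qed
  show ?thesis
    unfolding metric_2_regular_def S_def[symmetric]
    using wne cpos rho0 rho main by blast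
qed

end
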